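(* If an invariant state is supported on $V\ominus\operatorname{ran}|Z|_1$, then it is supported on $W$.
   Context: Fix integers $N\ge 2$ and $n_1\ge n_2\ge\dots\ge n_N\ge 1$. Let $\mathcal H$ be a finite-dimensional complex Hilbert space with orthonormal basis $\{|-\rangle,|+\rangle\}\cup\{|a_k\rangle:1\le k\le N,\ 0\le a\le n_k-1\}$. For vectors $x,y$, $|x\rangle\langle y|$ denotes the operator $u\mapsto\langle y,u\rangle x$. Put $E_k=\mathrm{span}\{|a_k\rangle:0\le a\le n_k-1\}$, $P_k$ the orthogonal projection onto $E_k$, $P_\pm=|\pm\rangle\langle\pm|$, $\zeta_k=e^{2\pi i/n_k}$, and $\varphi_{a_k}=n_k^{-1/2}\sum_{b=0}^{n_k-1}\zeta_k^{-ba}|b_k\rangle$ for $0\le a\le n_k-1$. For $1\le k\le N-1$ let $Z_k=n_k^{-1/2}\sum_{b=0}^{n_{k+1}-1}\sum_{a=0}^{n_k-1}\zeta_k^{ba}|b_{k+1}\rangle\langle a_k|$ (an operator on $\mathcal H$), $|Z|_k=Z_k^*Z_k$. The transport operator is $Z=\sum_{k=1}^{N-1}Z_k$. Let $\omega$ range over the set $\{\omega_+,\omega_-,\omega_1,\dots,\omega_{N-1}\}$ of (distinct) Bohr frequencies, and let $\Gamma_{\pm,\omega}>0$, $\gamma_{\pm,\omega}\in\mathbb R$ be constants. Kraus operators: $L_{-,\omega_+}=\sqrt{n_1\Gamma_{-,\omega_+}}|\varphi_{0_1}\rangle\langle +|$, $L_{+,\omega_+}=\sqrt{n_1\Gamma_{+,\omega_+}}|+\rangle\langle\varphi_{0_1}|$,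 $L_{-,\omega_k}=\sqrt{\Gamma_{-,\omega_k}}Z_k$, $L_{+,\omega_k}=\sqrt{\Gamma_{+,\omega_k}}Z_k^*$ ($1\le k\le N-1$), $L_{-,\omega_-}=\sqrt{\Gamma_{-,\omega_-}}|-\rangle\langle\varphi_{0_N}|$, $L_{+,\omega_-}=0$. Effective Hamiltonian $H_{\mathrm{eff}}=n_1\gamma_{-,\omega_+}P_+-n_1\gamma_{+,\omega_+}|\varphi_{0_1}\rangle\langle\varphi_{0_1}|+\gamma_{-,\omega_-}|\varphi_{0_N}\rangle\langle\varphi_{0_N}|-\gamma_{+,\omega_-}P_-+\sum_{k=1}^{N-1}(\gamma_{-,\omega_k}|Z|_k-\gamma_{+,\omega_k}P_{k+1})$. The generator is $\mathcal L(\rho)=-i[H_{\mathrm{eff}},\rho]+\sum_{\omega}\sum_{\epsilon=\pm}\big(L_{\epsilon,\omega}\rho L_{\epsilon,\omega}^*-\tfrac12\{L_{\epsilon,\omega}^*L_{\epsilon,\omega},\rho\}\big)$. A state is a positive operator of trace one; it is invariant if $\mathcal L(\rho)=0$; an operator is supported on a subspace $E$ if its range is contained in $E$. The interaction-free subspace is $W=\bigcap_{\omega,\epsilon=\pm}(\ker L_{\epsilon,\omega}\cap\ker L_{\epsilon,\omega}^* )$. $V$ is the orthogonal complement of the set $\{|-\rangle,|+\rangle,Z^n\varphi_{0_1},Z^{*n}\varphi_{0_N},Z^{*s}\varphi_{0_{2m+1}}:0\le n\le N-1,\ 1\le m\le (N-1)/2,\ 1\le s\le 2m\}$. $A\ominus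 B$ denotes $A\cap B^\perp$. *)

theory Defs
  imports "HOL-Analysis.Analysis" "HOL-Library.Function_Algebras"
begin

text \<open>Basis labels: Minus = |->, Plus = |+>, Site k a = |a_k> (1 <= k <= N, 0 <= a <= n_k - 1).
  Vectors are functions lab => complex vanishing off the basis; operators are their
  matrices lab => lab => complex with respect to the basis (entry A i j = <e_i, A e_j>).\<close>

datatype lab = Minus | Plus | Site nat nat

type_synonym vec = "lab \<Rightarrow> complex"
type_synonym op = "lab \<Rightarrow> lab \<Rightarrow> complex"

definition basis :: "nat \<Rightarrow> (nat \<Rightarrow> nat) \<Rightarrow> lab set" where
  "basis N n = {Minus, Plus} \<union> {Site k a | k a. 1 \<le> k \<and> k \<le> N \<and> a < n k}"

definition Hsp :: "nat \<Rightarrow> (nat \<Rightarrow> nat) \<Rightarrow> vec set" where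
  "Hsp N n = {v. \<forall>i. i \<notin> basis N n \<longrightarrow> v i = 0}"

definition is_op :: "nat \<Rightarrow> (nat \<Rightarrow> nat) \<Rightarrow> op \<Rightarrow> bool" where
  "is_op N n A \<longleftrightarrow> (\<forall>i j. i \<notin> basis N n \<or> j \<notin> basis N n \<longrightarrow> A i j = 0)"

definition inner_H :: "nat \<Rightarrow> (nat \<Rightarrow> nat) \<Rightarrow> vec \<Rightarrow> vec \<Rightarrow> complex" where
  "inner_H N n x y = (\<Sum>i\<in>basis N n. cnj (x i) * y i)"

definition app :: "nat \<Rightarrow> (nat \<Rightarrow> nat) \<Rightarrow> op \<Rightarrow> vec \<Rightarrow> vec" where
  "app N n A v = (\<lambda>i. if i \<in> basis N n then (\<Sum>j\<in>basis N n. A i j * v j) else 0)"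

definition mmul :: "nat \<Rightarrow> (nat \<Rightarrow> nat) \<Rightarrow> op \<Rightarrow> op \<Rightarrow> op" where
  "mmul N n A C = (\<lambda>i j. \<Sum>l\<in>basis N n. A i l * C l j)"

definition adj :: "op \<Rightarrow> op" where
  "adj A = (\<lambda>i j. cnj (A j i))"

definition scal :: "complex \<Rightarrow> op \<Rightarrow> op" where
  "scal c A = (\<lambda>i j. c * A i j)"

definition ket :: "lab \<Rightarrow> vec" where
  "ket l = (\<lambda>i. if i = l then 1 else 0)"

definition ketbra :: "vec \<Rightarrow> vec \<Rightarrow> op" where
  "ketbra x y = (\<lambda>i j. x i * cnj (y j))"

definition trace_H :: "nat \<Rightarrow> (nat \<Rightarrow> nat) \<Rightarrow> op \<Rightarrow> complex" where
  "trace_H N n A = (\<Sum>i\<in>basis N n. A i i)"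

definition positive_op :: "nat \<Rightarrow> (nat \<Rightarrow> nat) \<Rightarrow> op \<Rightarrow> bool" where
  "positive_op N n A \<longleftrightarrow> is_op N n A \<and>
     (\<forall>v\<in>Hsp N n. Im (inner_H N n v (app N n A v)) = 0 \<and> 0 \<le> Re (inner_H N n v (app N n A v)))"

definition is_state :: "nat \<Rightarrow> (nat \<Rightarrow> nat) \<Rightarrow> op \<Rightarrow> bool" where
  "is_state N n \<rho> \<longleftrightarrow> positive_op N n \<rho> \<and> trace_H N n \<rho> = 1"

definition ran_op :: "nat \<Rightarrow> (nat \<Rightarrow> nat) \<Rightarrow> op \<Rightarrow> vec set" where
  "ran_op N n A = app N n A ` Hsp N n"

definition ker_op :: "nat \<Rightarrow> (nat \<Rightarrow> nat) \<Rightarrow> op \<Rightarrow> vec set" where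
  "ker_op N n A = {v \<in> Hsp N n. app N n A v = (\<lambda>_. 0)}"

definition supported_on :: "nat \<Rightarrow> (nat \<Rightarrow> nat) \<Rightarrow> op \<Rightarrow> vec set \<Rightarrow> bool" where
  "supported_on N n A E \<longleftrightarrow> ran_op N n A \<subseteq> E"

definition perp :: "nat \<Rightarrow> (nat \<Rightarrow> nat) \<Rightarrow> vec set \<Rightarrow> vec set" where
  "perp N n S = {v \<in> Hsp N n. \<forall>s\<in>S. inner_H N n s v = 0}"

definition zeta :: "(nat \<Rightarrow> nat) \<Rightarrow> nat \<Rightarrow> complex" where
  "zeta n k = cis (2 * pi / real (n k))"

definition phi :: "(nat \<Rightarrow> nat) \<Rightarrow> nat \<Rightarrow> nat \<Rightarrow> vec" where
  "phi n k a = (\<lambda>i. complex_of_real (1 / sqrt (real (n k))) *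
      (\<Sum>b<n k. inverse (zeta n k ^ (b * a)) * ket (Site k b) i))"

definition Zop :: "(nat \<Rightarrow> nat) \<Rightarrow> nat \<Rightarrow> op" where
  "Zop n k = (\<lambda>i j. complex_of_real (1 / sqrt (real (n k))) *
      (\<Sum>b<n (Suc k). \<Sum>a<n k. zeta n k ^ (b * a) * ketbra (ket (Site (Suc k) b)) (ket (Site k a)) i j))"

definition absZ :: "nat \<Rightarrow> (nat \<Rightarrow> nat) \<Rightarrow> nat \<Rightarrow> op" where
  "absZ N n k = mmul N n (adj (Zop n k)) (Zop n k)"

definition Pk :: "(nat \<Rightarrow> nat) \<Rightarrow> nat \<Rightarrow> op" where
  "Pk n k = (\<lambda>i j. \<Sum>a<n k. ketbra (ket (Site k a)) (ket (Site k a)) i j)"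

definition Pplus :: op where "Pplus = ketbra (ket Plus) (ket Plus)"
definition Pminus :: op where "Pminus = ketbra (ket Minus) (ket Minus)"

definition Ztot :: "nat \<Rightarrow> (nat \<Rightarrow> nat) \<Rightarrow> op" where
  "Ztot N n = (\<Sum>k\<in>{1..N-1}. Zop n k)"

text \<open>Bohr frequencies omega_+, omega_-, omega_k (distinct labels), and signs epsilon.\<close>
datatype freq = Wp | Wm | Wk nat
datatype pm = Pos | Neg

definition freqs :: "nat \<Rightarrow> freq set" where
  "freqs N = {Wp, Wm} \<union> Wk ` {1..N-1}"

definition Kraus :: "nat \<Rightarrow> (nat \<Rightarrow> nat) \<Rightarrow> (pm \<Rightarrow> freq \<Rightarrow> real) \<Rightarrow> pm \<Rightarrow> freq \<Rightarrow> op" where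
  "Kraus N n \<Gamma> e w = (case (e, w) of
     (Neg, Wp) \<Rightarrow> scal (sqrt (real (n 1) * \<Gamma> Neg Wp)) (ketbra (phi n 1 0) (ket Plus))
   | (Pos, Wp) \<Rightarrow> scal (sqrt (real (n 1) * \<Gamma> Pos Wp)) (ketbra (ket Plus) (phi n 1 0))
   | (Neg, Wk k) \<Rightarrow> scal (sqrt (\<Gamma> Neg (Wk k))) (Zop n k)
   | (Pos, Wk k) \<Rightarrow> scal (sqrt (\<Gamma> Pos (Wk k))) (adj (Zop n k))
   | (Neg, Wm) \<Rightarrow> scal (sqrt (\<Gamma> Neg Wm)) (ketbra (ket Minus) (phi n N 0))
   | (Pos, Wm) \<Rightarrow> (\<lambda>_ _. 0))"

definition Heff :: "nat \<Rightarrow> (nat \<Rightarrow> nat) \<Rightarrow> (pm \<Rightarrow> freq \<Rightarrow> real) \<Rightarrow> op" where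
  "Heff N n \<gamma> =
      scal (real (n 1) * \<gamma> Neg Wp) Pplus
    - scal (real (n 1) * \<gamma> Pos Wp) (ketbra (phi n 1 0) (phi n 1 0))
    + scal (\<gamma> Neg Wm) (ketbra (phi n N 0) (phi n N 0))
    - scal (\<gamma> Pos Wm) Pminus
    + (\<Sum>k\<in>{1..N-1}. scal (\<gamma> Neg (Wk k)) (absZ N n k) - scal (\<gamma> Pos (Wk k)) (Pk n (Suc k)))"

definition generator :: "nat \<Rightarrow> (nat \<Rightarrow> nat) \<Rightarrow> (pm \<Rightarrow> freq \<Rightarrow> real) \<Rightarrow> (pm \<Rightarrow> freq \<Rightarrow> real) \<Rightarrow> op \<Rightarrow> op" where
  "generator N n \<Gamma> \<gamma> \<rho> =
     scal (- \<i>) (mmul N n (Heff N n \<gamma>) \<rho> - mmul N n \<rho> (Heff N n \<gamma>))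
   + (\<Sum>w\<in>freqs N. \<Sum>e\<in>{Pos, Neg}.
        mmul N n (mmul N n (Kraus N n \<Gamma> e w) \<rho>) (adj (Kraus N n \<Gamma> e w))
      - scal (1/2) (mmul N n (mmul N n (adj (Kraus N n \<Gamma> e w)) (Kraus N n \<Gamma> e w)) \<rho>
                  + mmul N n \<rho> (mmul N n (adj (Kraus N n \<Gamma> e w)) (Kraus N n \<Gamma> e w))))"

definition invariant_state :: "nat \<Rightarrow> (nat \<Rightarrow> nat) \<Rightarrow> (pm \<Rightarrow> freq \<Rightarrow> real) \<Rightarrow> (pm \<Rightarrow> freq \<Rightarrow> real) \<Rightarrow> op \<Rightarrow> bool" where
  "invariant_state N n \<Gamma> \<gamma> \<rho> \<longleftrightarrow> is_state N n \<rho> \<and>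
     (\<forall>i\<in>basis N n. \<forall>j\<in>basis N n. generator N n \<Gamma> \<gamma> \<rho> i j = 0)"

definition Wsp :: "nat \<Rightarrow> (nat \<Rightarrow> nat) \<Rightarrow> (pm \<Rightarrow> freq \<Rightarrow> real) \<Rightarrow> vec set" where
  "Wsp N n \<Gamma> = Hsp N n \<inter> (\<Inter>w\<in>freqs N. \<Inter>e\<in>{Pos, Neg}.
      ker_op N n (Kraus N n \<Gamma> e w) \<inter> ker_op N n (adj (Kraus N n \<Gamma> e w)))"

definition Vgen :: "nat \<Rightarrow> (nat \<Rightarrow> nat) \<Rightarrow> vec set" where
  "Vgen N n = {ket Minus, ket Plus}
     \<union> {(app N n (Ztot N n) ^^ m) (phi n 1 0) | m. m \<le> N - 1}
     \<union> {(app N n (adj (Ztot N n)) ^^ m) (phi n N 0) | m. m \<le> N - 1}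
     \<union> {(app N n (adj (Ztot N n)) ^^ s) (phi n (2*m+1) 0) | m s. 1 \<le> m \<and> 2*m \<le> N - 1 \<and> 1 \<le> s \<and> s \<le> 2*m}"

definition Vsp :: "nat \<Rightarrow> (nat \<Rightarrow> nat) \<Rightarrow> vec set" where
  "Vsp N n = perp N n (Vgen N n)"

end

theory Submission
  imports Defs
begin

lemma sum_fun_apply: "(sum f A) x = sum (\<lambda>a. f a x) A"
  by (induct A rule: infinite_finite_induct) auto

lemma finite_basis: "finite (basis N n)"
proof -
  have "basis N n \<subseteq> {Minus, Plus} \<union> (\<lambda>(k,a). Site k a) ` (SIGMA k:{1..N}. {..<n k})"
    unfolding basis_def by auto
  thus ?thesis by (rule finite_subset) auto
qed

definition sq :: "nat \<Rightarrow> (nat \<Rightarrow> nat) \<Rightarrow> op \<Rightarrow> vec \<Rightarrow> vec \<Rightarrow> complex" where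
  "sq N n A x y = (\<Sum>i\<in>basis N n. \<Sum>j\<in>basis N n. cnj (x i) * A i j * y j)"

lemma inner_app: "inner_H N n x (app N n A y) = sq N n A x y"
  unfolding inner_H_def app_def sq_def by (simp add: sum_distrib_left mult.assoc)

lemma sq_add: "sq N n (A + B) x y = sq N n A x y + sq N n B x y"
  by (simp add: sq_def algebra_simps sum.distrib)
lemma sq_diff: "sq N n (A - B) x y = sq N n A x y - sq N n B x y"
  by (simp add: sq_def algebra_simps sum_subtractf)
lemma sq_scal: "sq N n (scal c A) x y = c * sq N n A x y"
  by (simp add: sq_def scal_def sum_distrib_left mult_ac)
lemma sq_zero: "sq N n 0 x y = 0"
  by (simp add: sq_def)
lemma sq_sum: "sq N n (sum f S) x y = (\<Sum>s\<in>S. sq N n (f s) x y)"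
proof -
  have "sq N n (sum f S) x y = (\<Sum>i\<in>basis N n. \<Sum>j\<in>basis N n. \<Sum>s\<in>S. cnj (x i) * f s i j * y j)"
    unfolding sq_def sum_fun_apply by (simp add: sum_distrib_left sum_distrib_right)
  also have "\<dots> = (\<Sum>s\<in>S. sq N n (f s) x y)"
    unfolding sq_def by (subst sum.swap, rule sum.cong[OF refl], subst sum.swap, rule refl)
  finally show ?thesis .
qed

definition herm :: "nat \<Rightarrow> (nat \<Rightarrow> nat) \<Rightarrow> op \<Rightarrow> bool" where
  "herm N n A \<longleftrightarrow> (\<forall>i\<in>basis N n. \<forall>j\<in>basis N n. A i j = cnj (A j i))"

lemma sum1:
  assumes "finite B" "i \<in> B" "\<forall>a\<in>B. a \<noteq> i \<longrightarrow> f a = 0"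
  shows "sum f B = f i"
  using assms by (simp add: sum.remove)

lemma sum2:
  assumes "finite B" "i \<in> B" "j \<in> B" "i \<noteq> j" "\<forall>a\<in>B. a \<noteq> i \<and> a \<noteq> j \<longrightarrow> f a = 0"
  shows "sum f B = f i + f j"
proof -
  have "sum f B = sum f {i,j}"
    by (rule sum.mono_neutral_right) (use assms in auto)
  thus ?thesis using assms by simp
qed

lemma sq_two:
  assumes "i \<in> basis N n" "j \<in> basis N n" "i \<noteq> j"
  shows "sq N n A (\<lambda>a. if a = i then p else if a = j then q else 0) (\<lambda>a. if a = i then p else if a = j then q else 0) = cnj p * A i i * p + cnj p * A i j * q + cnj q * A j i * p + cnj q * A j j * q" (is "sq N n A ?v ?v = _")
proof -
  have f: "finite (basis N n)" by (rule finite_basis)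
  have "sq N n A ?v ?v = (\<Sum>a\<in>basis N n. cnj (?v a) * A a i * p + cnj (?v a) * A a j * q)"
    unfolding sq_def
    by (rule sum.cong[OF refl], subst sum2[OF f assms(1,2,3)]) (use assms(3) in auto)
  also have "\<dots> = cnj p * A i i * p + cnj p * A i j * q + cnj q * A j i * p + cnj q * A j j * q"
    by (subst sum2[OF f assms(1,2,3)]) (use assms(3) in auto)
  finally show ?thesis .
qed

lemma sq_one:
  assumes "i \<in> basis N n"
  shows "sq N n A (ket i) (ket i) = A i i"
proof -
  have f: "finite (basis N n)" by (rule finite_basis)
  have "sq N n A (ket i) (ket i) = (\<Sum>a\<in>basis N n. cnj (ket i a) * A a i)"
    unfolding sq_def by (rule sum.cong[OF refl], subst sum1[OF f assms]) (auto simp: ket_def)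
  also have "\<dots> = A i i"
    by (subst sum1[OF f assms]) (auto simp: ket_def)
  finally show ?thesis .
qed

lemma pos_sq:
  assumes "positive_op N n A" "v \<in> Hsp N n"
  shows "Im (sq N n A v v) = 0" "0 \<le> Re (sq N n A v v)"
  using assms unfolding positive_op_def inner_app[symmetric] by auto

lemma pos_herm:
  assumes "positive_op N n A"
  shows "herm N n A"
  unfolding herm_def
proof (intro ballI)
  fix i j assume i: "i \<in> basis N n" and j: "j \<in> basis N n"
  have ket_H: "ket l \<in> Hsp N n" if "l \<in> basis N n" for l
    using that by (auto simp: Hsp_def ket_def)
  have ii: "Im (A i i) = 0" using pos_sq(1)[OF assms ket_H[OF i]] sq_one[OF i] by simp
  have jj: "Im (A j j) = 0" using pos_sq(1)[OF assms ket_H[OF j]] sq_one[OF j] by simp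
  show "A i j = cnj (A j i)"
  proof (cases "i = j")
    case True thus ?thesis using ii by (simp add: complex_eq_iff)
  next
    case False
    define v1 where "v1 = (\<lambda>a. if a = i then 1 else if a = j then (1::complex) else 0)"
    define v2 where "v2 = (\<lambda>a. if a = i then 1 else if a = j then \<i> else 0)"
    have H1: "v1 \<in> Hsp N n" using i j by (auto simp: Hsp_def v1_def)
    have H2: "v2 \<in> Hsp N n" using i j by (auto simp: Hsp_def v2_def)
    have e1: "Im (sq N n A v1 v1) = 0" by (rule pos_sq(1)[OF assms H1])
    have e2: "Im (sq N n A v2 v2) = 0" by (rule pos_sq(1)[OF assms H2])
    from e1 have "Im (A i j) + Im (A j i) = 0"
      unfolding v1_def sq_two[OF i j False] using ii jj by simp
    moreover from e2 have "Re (A i j) - Re (A j i) = 0"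
      unfolding v2_def sq_two[OF i j False] using ii jj by simp
    ultimately show ?thesis by (simp add: complex_eq_iff)
  qed
qed

lemma sq_herm:
  assumes "herm N n A"
  shows "sq N n A y z = cnj (sq N n A z y)"
proof -
  have "cnj (sq N n A z y) = (\<Sum>i\<in>basis N n. \<Sum>j\<in>basis N n. z i * cnj (A i j) * cnj (y j))"
    unfolding sq_def by simp
  also have "\<dots> = (\<Sum>i\<in>basis N n. \<Sum>j\<in>basis N n. cnj (y j) * A j i * z i)"
    using assms unfolding herm_def
    by (intro sum.cong refl) (metis complex_cnj_cnj mult.commute mult.left_commute)
  also have "\<dots> = sq N n A y z"
    unfolding sq_def by (rule sum.swap)
  finally show ?thesis by simp
qed

lemma app_H: "app N n A v \<in> Hsp N n"
  by (simp add: app_def Hsp_def)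

lemma sq_expand:
  "sq N n A (\<lambda>i. x i + c * u i) (\<lambda>i. x i + c * u i) =
     sq N n A x x + c * sq N n A x u + cnj c * sq N n A u x + cnj c * c * sq N n A u u"
proof -
  have e: "cnj (x i + c * u i) * A i j * (x j + c * u j) = cnj (x i) * A i j * x j + c * (cnj (x i) * A i j * u j)
     + cnj c * (cnj (u i) * A i j * x j) + cnj c * c * (cnj (u i) * A i j * u j)" for i j
    by (simp add: algebra_simps)
  show ?thesis unfolding sq_def e by (simp only: sum.distrib sum_distrib_left[symmetric])
qed

lemma psd_ker:
  assumes pos: "positive_op N n A" and y: "y \<in> Hsp N n" and q: "sq N n A y y = 0"
  shows "app N n A y = (\<lambda>_. 0)"
proof -
  have h: "herm N n A" by (rule pos_herm[OF pos])
  define z where "z = app N n A y"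
  define a where "a = sq N n A z y"
  define b where "b = sq N n A z z"
  have a_eq: "a = (\<Sum>i\<in>basis N n. of_real ((cmod (z i))\<^sup>2))"
    unfolding a_def inner_app[symmetric] z_def inner_H_def
    by (intro sum.cong refl) (metis complex_norm_square mult.commute)
  have aR: "a = of_real (\<Sum>i\<in>basis N n. (cmod (z i))\<^sup>2)" unfolding a_eq by simp
  have zH: "z \<in> Hsp N n" unfolding z_def by (rule app_H)
  have bI: "Im b = 0" and bR: "0 \<le> Re b" using pos_sq[OF pos zH] b_def by auto
  have ya: "sq N n A y z = a" using sq_herm[OF h, of y z] aR a_def by simp
  define ar where "ar = (\<Sum>i\<in>basis N n. (cmod (z i))\<^sup>2)"
  have ar0: "0 \<le> ar" unfolding ar_def by (simp add: sum_nonneg)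
  define s where "s = ar / (Re b + 1)"
  define v where "v = (\<lambda>i. y i + complex_of_real (- s) * z i)"
  have vH: "v \<in> Hsp N n" using y zH by (auto simp: Hsp_def v_def)
  have b_eq: "b = of_real (Re b)" using bI by (simp add: complex_eq_iff)
  have a_eq2: "a = of_real ar" using aR ar_def by simp
  have zy: "sq N n A z y = a" by (simp add: a_def)
  have "sq N n A v v = of_real (- s) * a + cnj (of_real (- s)) * a + cnj (of_real (- s)) * of_real (- s) * b"
    unfolding v_def sq_expand q ya zy b_def by simp
  also have "\<dots> = of_real (- 2 * s * ar + s * s * Re b)"
    by (subst b_eq) (simp add: a_eq2)
  finally have "sq N n A v v = of_real (- 2 * s * ar + s * s * Re b)" .
  hence "0 \<le> - 2 * s * ar + s * s * Re b" using pos_sq(2)[OF pos vH] by simp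
  hence pr: "0 \<le> s * (s * Re b - 2 * ar)" by (simp add: algebra_simps)
  have b1: "Re b + 1 > 0" using bR by simp
  have sb: "s * Re b \<le> ar" unfolding s_def using b1 ar0 bR by (simp add: field_simps)
  have "ar = 0"
  proof (rule ccontr)
    assume "ar \<noteq> 0" hence ap: "ar > 0" using ar0 by simp
    hence "s > 0" unfolding s_def using b1 by simp
    moreover have "s * Re b - 2 * ar < 0" using sb ap by simp
    ultimately have "s * (s * Re b - 2 * ar) < 0" by (rule mult_pos_neg)
    thus False using pr by simp
  qed
  hence "\<forall>i\<in>basis N n. cmod (z i) ^ 2 = 0"
    unfolding ar_def using finite_basis by (subst (asm) sum_nonneg_eq_0_iff) auto
  hence "\<forall>i\<in>basis N n. z i = 0" by simp
  moreover have "\<forall>i. i \<notin> basis N n \<longrightarrow> z i = 0" using zH by (simp add: Hsp_def)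
  ultimately show ?thesis unfolding z_def[symmetric] by auto
qed

lemma app_ket: "l \<in> basis N n \<Longrightarrow> app N n A (ket l) = (\<lambda>i. if i \<in> basis N n then A i l else 0)"
  unfolding app_def by (rule ext, subst sum1[OF finite_basis, of l]) (auto simp: ket_def)

lemma ket_H: "l \<in> basis N n \<Longrightarrow> ket l \<in> Hsp N n"
  by (auto simp: Hsp_def ket_def)

lemma inner_ket: "l \<in> basis N n \<Longrightarrow> inner_H N n (ket l) w = w l"
  unfolding inner_H_def by (subst sum1[OF finite_basis, of l]) (auto simp: ket_def)

lemma orth_ker:
  assumes h: "herm N n A" and o: "\<forall>v\<in>Hsp N n. inner_H N n g (app N n A v) = 0"
  shows "app N n A g = (\<lambda>_. 0)"
proof
  fix l show "app N n A g l = 0"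
  proof (cases "l \<in> basis N n")
    case True
    have "0 = inner_H N n g (app N n A (ket l))" using o ket_H[OF True] by simp
    also have "\<dots> = (\<Sum>i\<in>basis N n. cnj (g i) * A i l)"
      unfolding app_ket[OF True] inner_H_def by simp
    also have "\<dots> = cnj (\<Sum>i\<in>basis N n. A l i * g i)"
    proof -
      have "\<forall>i\<in>basis N n. A i l = cnj (A l i)" using h True unfolding herm_def by blast
      hence "(\<Sum>i\<in>basis N n. cnj (g i) * A i l) = (\<Sum>i\<in>basis N n. cnj (A l i * g i))"
        by (intro sum.cong refl) (simp add: mult.commute)
      thus ?thesis by simp
    qed
    finally have "(\<Sum>i\<in>basis N n. A l i * g i) = 0" by (metis complex_cnj_zero_iff)
    thus ?thesis using True unfolding app_def by simp
  qed (simp add: app_def)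
qed

lemma ker_orth:
  assumes h: "herm N n A" and u: "app N n A u = (\<lambda>_. 0)"
  shows "inner_H N n u (app N n A v) = 0"
proof -
  have "inner_H N n u (app N n A v) = cnj (sq N n A v u)"
    by (subst inner_app, rule sq_herm[OF h])
  also have "\<dots> = cnj (inner_H N n v (app N n A u))" by (subst inner_app) (rule refl)
  finally show ?thesis unfolding u by (simp add: inner_H_def)
qed

lemma app_mmul: "app N n (mmul N n A C) v = app N n A (app N n C v)"
proof
  fix i show "app N n (mmul N n A C) v i = app N n A (app N n C v) i"
  proof (cases "i \<in> basis N n")
    case True
    have "(\<Sum>j\<in>basis N n. (\<Sum>l\<in>basis N n. A i l * C l j) * v j)
        = (\<Sum>j\<in>basis N n. \<Sum>l\<in>basis N n. A i l * (C l j * v j))"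
      by (simp add: sum_distrib_left sum_distrib_right mult_ac)
    also have "\<dots> = (\<Sum>l\<in>basis N n. \<Sum>j\<in>basis N n. A i l * (C l j * v j))" by (rule sum.swap)
    also have "\<dots> = (\<Sum>l\<in>basis N n. A i l * app N n C v l)"
      by (intro sum.cong refl) (simp add: app_def sum_distrib_left)
    finally show ?thesis using True by (simp add: app_def mmul_def)
  qed (simp add: app_def)
qed

lemma inner_adj: "inner_H N n x (app N n K w) = inner_H N n (app N n (adj K) x) w"
proof -
  have "inner_H N n x (app N n K w) = (\<Sum>i\<in>basis N n. \<Sum>j\<in>basis N n. cnj (x i) * K i j * w j)"
    unfolding inner_H_def app_def by (simp add: sum_distrib_left mult_ac)
  also have "\<dots> = (\<Sum>j\<in>basis N n. \<Sum>i\<in>basis N n. cnj (x i) * K i j * w j)" by (rule sum.swap)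
  also have "\<dots> = inner_H N n (app N n (adj K) x) w"
    unfolding inner_H_def app_def adj_def by (simp add: sum_distrib_left sum_distrib_right mult_ac)
  finally show ?thesis .
qed

lemma app_zero_at: "app N n A x = (\<lambda>_. 0) \<Longrightarrow> l \<in> basis N n \<Longrightarrow> (\<Sum>j\<in>basis N n. A l j * x j) = 0"
  by (drule fun_cong[of _ _ l]) (simp add: app_def)

lemma sq_mmul_left:
  assumes "app N n R x = (\<lambda>_. 0)"
  shows "sq N n (mmul N n M R) x x = 0"
proof -
  have "sq N n (mmul N n M R) x x = inner_H N n x (app N n M (app N n R x))"
    by (simp only: inner_app[symmetric] app_mmul)
  also have "\<dots> = 0" unfolding assms by (simp add: inner_H_def app_def)
  finally show ?thesis .
qed

lemma sq_mmul_right: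
  assumes h: "herm N n R" and x: "app N n R x = (\<lambda>_. 0)"
  shows "sq N n (mmul N n R M) x x = 0"
proof -
  have "sq N n (mmul N n R M) x x = inner_H N n x (app N n R (app N n M x))"
    by (simp only: inner_app[symmetric] app_mmul)
  also have "\<dots> = 0" by (rule ker_orth[OF h x])
  finally show ?thesis .
qed

lemma sq_sandwich:
  "sq N n (mmul N n (mmul N n K R) (adj K)) x x = sq N n R (app N n (adj K) x) (app N n (adj K) x)"
proof -
  have "sq N n (mmul N n (mmul N n K R) (adj K)) x x = inner_H N n x (app N n K (app N n R (app N n (adj K) x)))"
    by (simp only: inner_app[symmetric] app_mmul)
  also have "\<dots> = inner_H N n (app N n (adj K) x) (app N n R (app N n (adj K) x))"
    by (rule inner_adj)
  finally show ?thesis by (simp add: inner_app)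
qed

lemma sum_nonneg_complex_zero:
  assumes "finite S" "\<forall>s\<in>S. Im (f s) = 0 \<and> 0 \<le> Re (f s)" "sum f S = 0"
  shows "\<forall>s\<in>S. f s = 0"
proof -
  have "sum (\<lambda>s. Re (f s)) S = 0" using assms(3) by (metis Re_sum zero_complex.simps(1))
  hence "\<forall>s\<in>S. Re (f s) = 0" using assms(1,2) by (subst (asm) sum_nonneg_eq_0_iff) auto
  thus ?thesis using assms(2) by (simp add: complex_eq_iff)
qed

lemma finite_freqs: "finite (freqs N)" by (simp add: freqs_def)

lemma inv_step:
  assumes inv: "invariant_state N n \<Gamma> \<gamma> \<rho>" and x: "app N n \<rho> x = (\<lambda>_. 0)"
    and w: "w \<in> freqs N"
  shows "app N n \<rho> (app N n (adj (Kraus N n \<Gamma> e w)) x) = (\<lambda>_. 0)"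
proof -
  have pos: "positive_op N n \<rho>" using inv by (simp add: invariant_state_def is_state_def)
  have h: "herm N n \<rho>" by (rule pos_herm[OF pos])
  define y where "y = (\<lambda>e w. app N n (adj (Kraus N n \<Gamma> e w)) x)"
  have "sq N n (generator N n \<Gamma> \<gamma> \<rho>) x x = 0"
    using inv unfolding invariant_state_def sq_def by simp
  hence S: "(\<Sum>w\<in>freqs N. \<Sum>e\<in>{Pos, Neg}. sq N n \<rho> (y e w) (y e w)) = 0"
    unfolding generator_def
    by (simp only: sq_add sq_diff sq_scal sq_sum sq_mmul_left[OF x] sq_mmul_right[OF h x] sq_sandwich y_def)
       simp
  have nn: "Im (sq N n \<rho> (y e w) (y e w)) = 0 \<and> 0 \<le> Re (sq N n \<rho> (y e w) (y e w))" for e w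
    using pos_sq[OF pos app_H] unfolding y_def by simp
  have "\<forall>w\<in>freqs N. (\<Sum>e\<in>{Pos, Neg}. sq N n \<rho> (y e w) (y e w)) = 0"
    by (rule sum_nonneg_complex_zero[OF finite_freqs _ S])
       (use nn in \<open>auto simp: sum_nonneg\<close>)
  hence "(\<Sum>e\<in>{Pos, Neg}. sq N n \<rho> (y e w) (y e w)) = 0" using w by blast
  hence "\<forall>e\<in>{Pos,Neg}. sq N n \<rho> (y e w) (y e w) = 0"
    by (intro sum_nonneg_complex_zero) (use nn in auto)
  moreover have "e \<in> {Pos, Neg}" by (cases e) auto
  ultimately have "sq N n \<rho> (y e w) (y e w) = 0" by blast
  thus ?thesis unfolding y_def by (rule psd_ker[OF pos app_H])
qed

lemma basis_Site: "Site k a \<in> basis N n \<longleftrightarrow> 1 \<le> k \<and> k \<le> N \<and> a < n k"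
  by (auto simp: basis_def)
lemma basis_PM: "Plus \<in> basis N n" "Minus \<in> basis N n"
  by (auto simp: basis_def)

lemma Zop_Site: "Zop n k (Site k1 b) (Site k2 a) =
   (if k1 = Suc k \<and> k2 = k \<and> b < n (Suc k) \<and> a < n k
    then complex_of_real (1 / sqrt (real (n k))) * zeta n k ^ (b * a) else 0)"
proof -
  have e: "zeta n k ^ (ba * aa) * ketbra (ket (Site (Suc k) ba)) (ket (Site k aa)) (Site k1 b) (Site k2 a) =
     (if aa = a then (if ba = b then (if k1 = Suc k \<and> k2 = k then zeta n k ^ (b * a) else 0) else 0) else 0)" for ba aa
    by (auto simp: ketbra_def ket_def)
  show ?thesis unfolding Zop_def e
    by (cases "a < n k"; simp only: sum.delta lessThan_iff if_True if_False sum.neutral_const; simp add: sum.delta)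
qed

lemma Zop_PM: "Zop n k Plus j = 0" "Zop n k Minus j = 0" "Zop n k i Plus = 0" "Zop n k i Minus = 0"
  unfolding Zop_def ketbra_def ket_def by simp_all

lemma root_sum:
  assumes m: "1 \<le> n k" and b: "b < n k" and b': "b' < n k"
  shows "(\<Sum>a<n k. zeta n k ^ (b' * a) * cnj (zeta n k ^ (b * a))) = (if b' = b then of_nat (n k) else 0)"
proof -
  define m where "m = n k"
  define \<theta> where "\<theta> = 2 * pi / real m"
  define q where "q = cis ((real b' - real b) * \<theta>)"
  have mpos: "real m > 0" using m unfolding m_def by simp
  have e: "zeta n k ^ (b' * a) * cnj (zeta n k ^ (b * a)) = q ^ a" for a
    unfolding zeta_def q_def Complex.DeMoivre cis_cnj cis_mult m_def[symmetric] \<theta>_def[symmetric]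
    by (rule arg_cong[where f=cis]) (simp add: algebra_simps)
  show ?thesis
  proof (cases "b' = b")
    case True
    hence "q = 1" unfolding q_def by simp
    thus ?thesis unfolding e using True by simp
  next
    case False
    have q1: "q \<noteq> 1"
    proof
      assume "q = 1"
      hence "cos ((real b' - real b) * \<theta>) = 1" unfolding q_def by (metis cis.sel(1) one_complex.sel(1))
      then obtain j :: int where j: "(real b' - real b) * \<theta> = of_int j * 2 * pi"
        by (auto simp: cos_one_2pi_int)
      hence "(real b' - real b) * (2 * pi) = (of_int j * real m) * (2 * pi)"
        unfolding \<theta>_def using mpos by (simp add: field_simps)
      hence jj: "real b' - real b = of_int j * real m"
        using pi_gt_zero by (metis mult_right_cancel pi_neq_zero mult_eq_0_iff zero_neq_numeral)
      have lt: "\<bar>real b' - real b\<bar> < real m" using b b' unfolding m_def by linarith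
      have "j = 0"
      proof (rule ccontr)
        assume "j \<noteq> 0"
        hence "1 \<le> \<bar>of_int j :: real\<bar>" by linarith
        hence "real m \<le> \<bar>of_int j\<bar> * real m" using mpos by simp
        also have "\<dots> = \<bar>real b' - real b\<bar>" unfolding jj abs_mult using mpos by simp
        finally show False using lt by simp
      qed
      thus False using jj False by simp
    qed
    have "q ^ m = cis (2 * pi * real_of_int (int b' - int b))"
      unfolding q_def Complex.DeMoivre \<theta>_def using mpos by (rule_tac arg_cong[where f=cis]) (simp add: field_simps)
    also have "\<dots> = 1" by (rule cis_multiple_2pi) simp
    finally have qm: "q ^ m = 1" .
    show ?thesis unfolding e using geometric_sum[OF q1, of m] qm False unfolding m_def by simp
  qed
qed

lemma sum_Site:
  assumes "finite B" "Site k ` {..<m} \<subseteq> B" "\<forall>i\<in>B. i \<notin> Site k ` {..<m} \<longrightarrow> f i = 0"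
  shows "sum f B = (\<Sum>a<m. f (Site k a))"
proof -
  have "sum f B = sum f (Site k ` {..<m})"
    by (rule sum.mono_neutral_right) (use assms in auto)
  also have "\<dots> = (\<Sum>a<m. f (Site k a))"
    by (subst sum.reindex) (auto simp: inj_on_def)
  finally show ?thesis .
qed

lemma app_adj_ket: "l \<in> basis N n \<Longrightarrow> app N n (adj A) (ket l) = (\<lambda>i. if i \<in> basis N n then cnj (A l i) else 0)"
  by (simp add: app_ket adj_def)

lemma ZZadj:
  assumes k1: "1 \<le> k" and kN: "k < N" and b: "b < n (Suc k)" and nn: "n (Suc k) \<le> n k"
  shows "app N n (Zop n k) (app N n (adj (Zop n k)) (ket (Site (Suc k) b))) = ket (Site (Suc k) b)"
proof
  fix i'
  have eB: "Site (Suc k) b \<in> basis N n" using k1 kN b by (simp add: basis_Site)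
  have nk: "1 \<le> n k" using b nn by simp
  show "app N n (Zop n k) (app N n (adj (Zop n k)) (ket (Site (Suc k) b))) i' = ket (Site (Suc k) b) i'"
  proof (cases "i' \<in> basis N n")
    case False
    thus ?thesis using eB by (auto simp: app_def ket_def)
  next
    case True
    have "app N n (Zop n k) (app N n (adj (Zop n k)) (ket (Site (Suc k) b))) i'
        = (\<Sum>i\<in>basis N n. Zop n k i' i * cnj (Zop n k (Site (Suc k) b) i))"
      using True unfolding app_adj_ket[OF eB] by (simp add: app_def cong: sum.cong)
    also have "\<dots> = (\<Sum>a<n k. Zop n k i' (Site k a) * cnj (Zop n k (Site (Suc k) b) (Site k a)))"
    proof (rule sum_Site[OF finite_basis])
      show "Site k ` {..<n k} \<subseteq> basis N n" using k1 kN by (auto simp: basis_Site)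
      show "\<forall>i\<in>basis N n. i \<notin> Site k ` {..<n k} \<longrightarrow> Zop n k i' i * cnj (Zop n k (Site (Suc k) b) i) = 0"
      proof (intro ballI impI)
        fix i assume "i \<in> basis N n" "i \<notin> Site k ` {..<n k}"
        thus "Zop n k i' i * cnj (Zop n k (Site (Suc k) b) i) = 0"
          by (cases i) (auto simp: Zop_PM Zop_Site)
      qed
    qed
    also have "\<dots> = ket (Site (Suc k) b) i'"
    proof (cases i')
      case (Site k1 b1)
      show ?thesis
      proof (cases "k1 = Suc k \<and> b1 < n (Suc k)")
        case True
        have "(\<Sum>a<n k. Zop n k i' (Site k a) * cnj (Zop n k (Site (Suc k) b) (Site k a)))
            = complex_of_real (1 / sqrt (real (n k)))^2 * (\<Sum>a<n k. zeta n k ^ (b1 * a) * cnj (zeta n k ^ (b * a)))"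
          using True b Site by (simp add: Zop_Site sum_distrib_left mult_ac power2_eq_square)
        also have "\<dots> = ket (Site (Suc k) b) i'"
          using root_sum[of n k b b1, OF nk] True b nn nk Site
          by (auto simp: ket_def power_divide of_real_power[symmetric])
        finally show ?thesis .
      next
        case False
        thus ?thesis using Site b by (auto simp: Zop_Site ket_def)
      qed
    qed (auto simp: Zop_PM ket_def)
    finally show ?thesis .
  qed
qed

lemma adj_scal: "adj (scal c A) = scal (cnj c) (adj A)" by (simp add: adj_def scal_def)
lemma adj_adj: "adj (adj A) = A" by (simp add: adj_def)
lemma adj_ketbra: "adj (ketbra x y) = ketbra y x" by (simp add: adj_def ketbra_def mult.commute)
lemma app_scal: "app N n (scal c A) v = (\<lambda>i. c * app N n A v i)"
  by (auto simp: app_def scal_def sum_distrib_left mult_ac)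
lemma app_cmult: "app N n R (\<lambda>i. c * y i) = (\<lambda>i. c * app N n R y i)"
  by (auto simp: app_def sum_distrib_left mult_ac)
lemma app_ketbra: "app N n (ketbra x y) w = (\<lambda>i. if i \<in> basis N n then x i * inner_H N n y w else 0)"
  by (auto simp: app_def ketbra_def inner_H_def sum_distrib_left mult_ac)
lemma app_vanish: "(\<forall>j\<in>basis N n. A i j * w j = 0) \<Longrightarrow> app N n A w i = 0"
  unfolding app_def by (simp only: sum.neutral if_cancel)

lemma K1:
  assumes inv: "invariant_state N n \<Gamma> \<gamma> \<rho>" and x: "app N n \<rho> x = (\<lambda>_. 0)"
    and k: "1 \<le> k" "k \<le> N - 1" and G: "\<forall>w\<in>freqs N. \<forall>e. 0 < \<Gamma> e w"
  shows "app N n \<rho> (app N n (Zop n k) x) = (\<lambda>_. 0)"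
    and "app N n \<rho> (app N n (adj (Zop n k)) x) = (\<lambda>_. 0)"
proof -
  have w: "Wk k \<in> freqs N" using k by (simp add: freqs_def)
  have s1: "sqrt (\<Gamma> Pos (Wk k)) \<noteq> 0" using G w by (metis less_irrefl real_sqrt_eq_zero_cancel_iff)
  have s2: "sqrt (\<Gamma> Neg (Wk k)) \<noteq> 0" using G w by (metis less_irrefl real_sqrt_eq_zero_cancel_iff)
  have "app N n \<rho> (app N n (adj (Kraus N n \<Gamma> Pos (Wk k))) x) = (\<lambda>_. 0)"
    by (rule inv_step[OF inv x w])
  hence "(\<lambda>i. complex_of_real (sqrt (\<Gamma> Pos (Wk k))) * app N n \<rho> (app N n (Zop n k) x) i) = (\<lambda>_. 0)"
    by (simp add: Kraus_def adj_scal adj_adj app_scal app_cmult)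
  thus "app N n \<rho> (app N n (Zop n k) x) = (\<lambda>_. 0)" using s1
    by (auto simp: fun_eq_iff)
  have "app N n \<rho> (app N n (adj (Kraus N n \<Gamma> Neg (Wk k))) x) = (\<lambda>_. 0)"
    by (rule inv_step[OF inv x w])
  hence "(\<lambda>i. complex_of_real (sqrt (\<Gamma> Neg (Wk k))) * app N n \<rho> (app N n (adj (Zop n k)) x) i) = (\<lambda>_. 0)"
    by (simp add: Kraus_def adj_scal adj_adj app_scal app_cmult)
  thus "app N n \<rho> (app N n (adj (Zop n k)) x) = (\<lambda>_. 0)" using s2
    by (auto simp: fun_eq_iff)
qed

theorem corollary3p18:
  fixes N :: nat and n :: "nat \<Rightarrow> nat"
    and \<Gamma> \<gamma> :: "pm \<Rightarrow> freq \<Rightarrow> real" and \<rho> :: op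
  assumes "N \<ge> 2"
    and "\<forall>k. 1 \<le> k \<and> k < N \<longrightarrow> n (Suc k) \<le> n k"
    and "\<forall>k. 1 \<le> k \<and> k \<le> N \<longrightarrow> 1 \<le> n k"
    and "\<forall>w\<in>freqs N. \<forall>e. 0 < \<Gamma> e w"
    and "invariant_state N n \<Gamma> \<gamma> \<rho>"
    and "supported_on N n \<rho> (Vsp N n \<inter> perp N n (ran_op N n (absZ N n 1)))"
  shows "supported_on N n \<rho> (Wsp N n \<Gamma>)"
proof -
  note inv = assms(5)
  have pos: "positive_op N n \<rho>" using inv by (simp add: invariant_state_def is_state_def)
  have h: "herm N n \<rho>" by (rule pos_herm[OF pos])
  have supp: "app N n \<rho> v \<in> Vsp N n \<and> app N n \<rho> v \<in> perp N n (ran_op N n (absZ N n 1))"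
    if "v \<in> Hsp N n" for v
    using assms(6) that unfolding supported_on_def ran_op_def by auto
  have nmono: "n (Suc k) \<le> n k" if "1 \<le> k" "k < N" for k using assms(2) that by blast
  have step1: "app N n \<rho> (app N n (adj (Zop n 1)) (ket (Site (Suc 1) b))) = (\<lambda>_. 0)"
    if b: "b < n (Suc 1)" for b
  proof -
    define u where "u = app N n (adj (Zop n 1)) (ket (Site (Suc 1) b))"
    have ZZ: "app N n (Zop n 1) u = ket (Site (Suc 1) b)"
      unfolding u_def by (rule ZZadj) (use assms(1) nmono[of 1] b in auto)
    have "app N n (absZ N n 1) u = u" unfolding absZ_def app_mmul ZZ by (simp add: u_def)
    moreover have "u \<in> Hsp N n" unfolding u_def by (rule app_H)
    ultimately have uran: "u \<in> ran_op N n (absZ N n 1)" unfolding ran_op_def by (metis image_eqI)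
    have "\<forall>v\<in>Hsp N n. inner_H N n u (app N n \<rho> v) = 0"
      using supp uran unfolding perp_def by blast
    thus ?thesis using orth_ker[OF h] u_def by blast
  qed
  have cols: "\<forall>b<n m. app N n \<rho> (ket (Site m b)) = (\<lambda>_. 0)" if "2 \<le> m" "m \<le> N" for m
    using that
  proof (induction m rule: less_induct)
    case (less m)
    then obtain k where mk: "m = Suc k" and k1: "1 \<le> k"
      by (metis Suc_le_D Suc_le_mono numeral_2_eq_2 One_nat_def)
    show ?case
    proof (intro allI impI)
      fix b assume b: "b < n m"
      have eB: "Site (Suc k) b \<in> basis N n" using less.prems b mk by (simp add: basis_Site)
      define u where "u = app N n (adj (Zop n k)) (ket (Site (Suc k) b))"
      have ku: "app N n \<rho> u = (\<lambda>_. 0)"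
      proof (cases "k = 1")
        case True thus ?thesis using step1 b mk u_def by simp
      next
        case False
        hence k2: "2 \<le> k" using k1 by simp
        have IH: "\<forall>a<n k. app N n \<rho> (ket (Site k a)) = (\<lambda>_. 0)"
          using less.IH[of k] k2 less.prems mk by simp
        have col: "\<rho> i (Site k a) = 0" if "i \<in> basis N n" "a < n k" for i a
        proof -
          have kB: "Site k a \<in> basis N n" using that k1 less.prems mk by (simp add: basis_Site)
          show ?thesis
            using fun_cong[OF IH[rule_format, OF that(2)], of i] app_ket[OF kB, of \<rho>] that(1) by simp
        qed
        show ?thesis
        proof
          fix i show "app N n \<rho> u i = 0"
          proof (cases "i \<in> basis N n")
            case iB: True
            show ?thesis
            proof (rule app_vanish, intro ballI)
              fix j assume j: "j \<in> basis N n"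
              show "\<rho> i j * u j = 0"
              proof (cases "\<exists>a. j = Site k a \<and> a < n k")
                case True thus ?thesis using col[OF iB] by auto
              next
                case False
                have "u j = 0" unfolding u_def app_adj_ket[OF eB] using False j
                  by (cases j) (auto simp: Zop_PM Zop_Site)
                thus ?thesis by simp
              qed
            qed
          qed (simp add: app_def)
        qed
      qed
      have "app N n \<rho> (app N n (Zop n k) u) = (\<lambda>_. 0)"
        by (rule K1(1)[OF inv ku k1 _ assms(4)]) (use less.prems mk in simp)
      moreover have "app N n (Zop n k) u = ket (Site m b)" unfolding u_def mk
        by (rule ZZadj) (use k1 less.prems mk b nmono in auto)
      ultimately show "app N n \<rho> (ket (Site m b)) = (\<lambda>_. 0)" by simp
    qed
  qed
  have rowz: "app N n \<rho> v (Site m b) = 0" if "2 \<le> m" for v m b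
  proof (cases "Site m b \<in> basis N n")
    case True
    hence mN: "m \<le> N" "b < n m" by (auto simp: basis_Site)
    have "\<rho> (Site m b) j = 0" if "j \<in> basis N n" for j
    proof -
      have "\<rho> j (Site m b) = 0"
        using fun_cong[OF cols[OF \<open>2 \<le> m\<close> mN(1), rule_format, OF mN(2)], of j] app_ket[OF True, of \<rho>] that
        by simp
      moreover have "\<rho> (Site m b) j = cnj (\<rho> j (Site m b))" using h True that unfolding herm_def by blast
      ultimately show ?thesis by simp
    qed
    thus ?thesis using True by (simp add: app_def)
  qed (simp add: app_def)
  have phiV: "phi n 1 0 \<in> Vgen N n" "phi n N 0 \<in> Vgen N n" "ket Plus \<in> Vgen N n" "ket Minus \<in> Vgen N n"
    unfolding Vgen_def by (auto intro!: exI[of _ 0])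
  show ?thesis
    unfolding supported_on_def ran_op_def
  proof (rule image_subsetI)
    fix v assume v: "v \<in> Hsp N n"
    define w where "w = app N n \<rho> v"
    have wH: "w \<in> Hsp N n" unfolding w_def by (rule app_H)
    have wV: "\<forall>g\<in>Vgen N n. inner_H N n g w = 0"
      using supp[OF v] unfolding w_def Vsp_def perp_def by blast
    have wP: "w Plus = 0" using wV phiV(3) inner_ket[OF basis_PM(1)] by metis
    have wM: "w Minus = 0" using wV phiV(4) inner_ket[OF basis_PM(2)] by metis
    have wphi: "inner_H N n (phi n 1 0) w = 0" "inner_H N n (phi n N 0) w = 0"
      using wV phiV by auto
    have wsupp: "\<exists>a. j = Site 1 a" if "w j \<noteq> 0" for j
    proof (cases j)
      case (Site m a)
      have "m \<noteq> 0"
      proof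
        assume "m = 0"
        hence "j \<notin> basis N n" using Site by (simp add: basis_Site)
        thus False using that wH by (simp add: Hsp_def)
      qed
      moreover have "\<not> 2 \<le> m" using rowz[of m v a] that Site unfolding w_def by auto
      ultimately show ?thesis using Site by (intro exI[of _ a]) simp
    qed (use that wP wM in auto)
    have wZ1: "app N n (Zop n 1) w = (\<lambda>_. 0)"
    proof
      fix i show "app N n (Zop n 1) w i = 0"
      proof (cases "\<exists>b. i = Site (Suc 1) b \<and> b < n (Suc 1)")
        case True
        then obtain b where i: "i = Site (Suc 1) b" and b: "b < n (Suc 1)" by blast
        have iB: "i \<in> basis N n" using i b assms(1) by (simp add: basis_Site)
        have "app N n (Zop n 1) w i = inner_H N n (ket i) (app N n (Zop n 1) w)"
          by (rule inner_ket[OF iB, symmetric])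
        also have "\<dots> = inner_H N n (app N n (adj (Zop n 1)) (ket i)) w" by (rule inner_adj)
        also have "\<dots> = 0" unfolding w_def i by (rule ker_orth[OF h step1[OF b]])
        finally show ?thesis .
      next
        case False
        show ?thesis
        proof (rule app_vanish, intro ballI)
          fix j show "Zop n 1 i j * w j = 0" using False by (cases i; cases j) (auto simp: Zop_PM Zop_Site)
        qed
      qed
    qed
    have wZk: "app N n (Zop n k) w = (\<lambda>_. 0)" if "k \<noteq> 1" for k
    proof
      fix i show "app N n (Zop n k) w i = 0"
      proof (rule app_vanish, intro ballI)
        fix j assume "j \<in> basis N n"
        show "Zop n k i j * w j = 0"
        proof (cases "w j = 0")
          case False
          then obtain a where "j = Site 1 a" using wsupp by blast
          thus ?thesis using that by (cases i) (auto simp: Zop_PM Zop_Site)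
        qed simp
      qed
    qed
    have wZa: "app N n (adj (Zop n k)) w = (\<lambda>_. 0)" if k1: "1 \<le> k" for k
    proof
      fix i show "app N n (adj (Zop n k)) w i = 0"
      proof (rule app_vanish, intro ballI)
        fix j assume "j \<in> basis N n"
        show "adj (Zop n k) i j * w j = 0"
        proof (cases "w j = 0")
          case False
          then obtain a where "j = Site 1 a" using wsupp by blast
          thus ?thesis using k1 by (cases i) (auto simp: Zop_PM Zop_Site adj_def)
        qed simp
      qed
    qed
    have wZall: "app N n (Zop n k) w = (\<lambda>_. 0)" for k
      using wZ1 wZk by (cases "k = 1") auto
    have iP: "inner_H N n (ket Plus) w = 0" "inner_H N n (ket Minus) w = 0"
      using inner_ket[OF basis_PM(1)] inner_ket[OF basis_PM(2)] wP wM by auto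
    have wphi1: "inner_H N n (phi n (Suc 0) 0) w = 0" using wphi(1) by simp
    have zero_app: "app N n (\<lambda>_ _. 0) w = (\<lambda>_. 0)" by (simp add: app_def fun_eq_iff)
    have zero_adj: "adj (\<lambda>_ _. 0) = (\<lambda>_ _. 0)" by (simp add: adj_def)
    have kill: "app N n (Kraus N n \<Gamma> e f) w = (\<lambda>_. 0) \<and> app N n (adj (Kraus N n \<Gamma> e f)) w = (\<lambda>_. 0)"
      if f: "f \<in> freqs N" for e f
      using f by (cases e; cases f)
         (auto simp: Kraus_def adj_scal adj_ketbra adj_adj app_scal app_ketbra wphi wphi1 iP wZall wZa zero_app zero_adj freqs_def)
    show "w \<in> Wsp N n \<Gamma>"
      unfolding Wsp_def ker_op_def using wH kill by blast
  qed
qed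

end
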